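(* Let $X(t)$ satisfy (A1)–(A2) and $\mathbf v:\mathcal S_n\to\mathbb R^d$. Let $\mathbf m^{\mathbf v}=(\min_jv_1(j),\dots,\min_jv_d(j))$ and $\mathbf M^{\mathbf v}=(\max_jv_1(j),\dots,\max_jv_d(j))$. Then for all $i,k\in\mathcal S_n$, all $\varepsilon>0$, all $t\ge0$ and all $\mathbf x\in\mathbb R^d$, \[ \begin{aligned} \mathbb P\{X(t)=i,X(t+\varepsilon)=k\}\,F^{\mathbf v}_i(t,\mathbf x-\varepsilon\mathbf M^{\mathbf v}) &\le\mathbb P\{X(t)=i,X(t+\varepsilon)=k,\mathbf L^{\mathbf v}(t+\varepsilon)\le\mathbf x\}\,\mathbb P\{X(t)=i\}\\ &\le\mathbb P\{X(t)=i,X(t+\varepsilon)=k\}\,F^{\mathbf v}_i(t,\mathbf x-\varepsilon\mathbf m^{\mathbf v}), \end{aligned} \] where comparisons of vectors are componentwise.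
   Context: (A1): $\{X(t)\}_{t\ge0}$ is a regular jump Markov process on $(\Omega,\mathcal F,\mathbb P)$ with values in $\mathcal S_n=\{1,\dots,n\}$, right-continuous trajectories, and transition rates $q_{ij}(t)$: $\mathbb P\{X(t+h)=j\mid X(t)=i\}=q_{ij}(t)h+o(h)$ for $j\ne i$. (A2): $Q(t)=(q_{ij}(t))$ is conservative ($q_i(t):=-q_{ii}(t)=\sum_{j\ne i}q_{ij}(t)$), continuous and bounded on $[0,\infty)$, and for each $i$ either $q_i\equiv0$ or $q_i>0$ everywhere with $\int_0^\infty q_i=\infty$. $\mathbf L^{\mathbf v}(t)=\int_0^t\mathbf v(X(s))\,ds$ and $F^{\mathbf v}_k(t,\mathbf x)=\mathbb P\{X(t)=k,\ \mathbf L^{\mathbf v}(t)\le\mathbf x\}$ (componentwise). *)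

theory Defs
  imports "HOL-Probability.Probability"
begin

text \<open>State space S_n = {1..n}. A process is X :: real => 'a => nat on a probability
  space M; only times t >= 0 are relevant. Vectors in R^d are real^'d, ordered
  componentwise (less_eq_vec_def).\<close>

definition state_event :: "'a measure \<Rightarrow> (real \<Rightarrow> 'a \<Rightarrow> nat) \<Rightarrow> real \<Rightarrow> nat \<Rightarrow> 'a set" where
  "state_event M X t i = {\<omega> \<in> space M. X t \<omega> = i}"

definition nat_filtration :: "'a measure \<Rightarrow> (real \<Rightarrow> 'a \<Rightarrow> nat) \<Rightarrow> real \<Rightarrow> 'a set set" where
  "nat_filtration M X s =
     sigma_sets (space M) (\<Union>u\<in>{0..s}. {state_event M X u j | j. True})"

text \<open>The Markov property is stated w.r.t. the natural filtration, in product form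
  (conditional independence of the future state and the past given the present).\<close>
definition regular_jump_markov ::
  "'a measure \<Rightarrow> nat \<Rightarrow> (real \<Rightarrow> 'a \<Rightarrow> nat) \<Rightarrow> (nat \<Rightarrow> nat \<Rightarrow> real \<Rightarrow> real) \<Rightarrow> bool" where
  "regular_jump_markov M n X q \<longleftrightarrow>
     prob_space M \<and>
     (\<forall>t\<ge>0. X t \<in> measurable M (count_space UNIV)) \<and>
     (\<forall>t\<ge>0. \<forall>\<omega>\<in>space M. X t \<omega> \<in> {1..n}) \<and>
     \<comment> \<open>right-continuous trajectories (discrete state space)\<close>
     (\<forall>\<omega>\<in>space M. \<forall>t\<ge>0. \<exists>\<delta>>0. \<forall>s\<in>{t..<t+\<delta>}. X s \<omega> = X t \<omega>) \<and>
     \<comment> \<open>regularity: left limits exist, hence finitely many jumps on bounded intervals\<close>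
     (\<forall>\<omega>\<in>space M. \<forall>t>0. \<exists>\<delta>>0. \<exists>j. \<forall>s\<in>{t-\<delta><..<t}. X s \<omega> = j) \<and>
     \<comment> \<open>Markov property\<close>
     (\<forall>s h i j A. 0 \<le> s \<longrightarrow> 0 \<le> h \<longrightarrow> A \<in> nat_filtration M X s \<longrightarrow>
        measure M (A \<inter> state_event M X s i \<inter> state_event M X (s+h) j) * measure M (state_event M X s i)
        = measure M (A \<inter> state_event M X s i) * measure M (state_event M X s i \<inter> state_event M X (s+h) j)) \<and>
     \<comment> \<open>transition rates: P{X(t+h)=j | X(t)=i} = q_ij(t) h + o(h), j \<noteq> i\<close>
     (\<forall>t\<ge>0. \<forall>i\<in>{1..n}. \<forall>j\<in>{1..n}. i \<noteq> j \<longrightarrow> measure M (state_event M X t i) > 0 \<longrightarrow>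
        ((\<lambda>h. (measure M (state_event M X t i \<inter> state_event M X (t+h) j) / measure M (state_event M X t i)
               - q i j t * h) / h) \<longlongrightarrow> 0) (at_right 0))"

definition total_rate :: "nat \<Rightarrow> (nat \<Rightarrow> nat \<Rightarrow> real \<Rightarrow> real) \<Rightarrow> nat \<Rightarrow> real \<Rightarrow> real" where
  "total_rate n q i t = - q i i t"

definition rate_assumptions :: "nat \<Rightarrow> (nat \<Rightarrow> nat \<Rightarrow> real \<Rightarrow> real) \<Rightarrow> bool" where
  "rate_assumptions n q \<longleftrightarrow>
     (\<forall>i\<in>{1..n}. \<forall>j\<in>{1..n}. i \<noteq> j \<longrightarrow> (\<forall>t\<ge>0. q i j t \<ge> 0)) \<and>
     (\<forall>i\<in>{1..n}. \<forall>t\<ge>0. total_rate n q i t = (\<Sum>j\<in>{1..n}-{i}. q i j t)) \<and>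
     (\<forall>i\<in>{1..n}. \<forall>j\<in>{1..n}. continuous_on {0..} (q i j)) \<and>
     (\<forall>i\<in>{1..n}. \<forall>j\<in>{1..n}. \<exists>B. \<forall>t\<ge>0. \<bar>q i j t\<bar> \<le> B) \<and>
     (\<forall>i\<in>{1..n}. (\<forall>t\<ge>0. total_rate n q i t = 0) \<or>
        ((\<forall>t\<ge>0. total_rate n q i t > 0) \<and>
         filterlim (\<lambda>T. integral {0..T} (total_rate n q i)) at_top at_top))"

definition occ :: "(nat \<Rightarrow> real^'d) \<Rightarrow> (real \<Rightarrow> 'a \<Rightarrow> nat) \<Rightarrow> real \<Rightarrow> 'a \<Rightarrow> real^'d" where
  "occ v X t \<omega> = integral {0..t} (\<lambda>s. v (X s \<omega>))"

definition Fv :: "'a measure \<Rightarrow> (nat \<Rightarrow> real^'d) \<Rightarrow> (real \<Rightarrow> 'a \<Rightarrow> nat) \<Rightarrow> nat \<Rightarrow> real \<Rightarrow> real^'d \<Rightarrow> real" where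
  "Fv M v X k t x = measure M {\<omega> \<in> space M. X t \<omega> = k \<and> occ v X t \<omega> \<le> x}"

definition vmin :: "nat \<Rightarrow> (nat \<Rightarrow> real^'d) \<Rightarrow> real^'d" where
  "vmin n v = (\<chi> c. Min ((\<lambda>j. v j $ c) ` {1..n}))"

definition vmax :: "nat \<Rightarrow> (nat \<Rightarrow> real^'d) \<Rightarrow> real^'d" where
  "vmax n v = (\<chi> c. Max ((\<lambda>j. v j $ c) ` {1..n}))"

end

theory Submission
  imports Defs
begin


definition Kn :: "nat \<Rightarrow> real" where "Kn N = real (Suc N)"
definition pN :: "real \<Rightarrow> nat \<Rightarrow> real \<Rightarrow> real" where
  "pN T N s = min T (real_of_int \<lceil>s * Kn N\<rceil> / Kn N)"

lemma Kn_pos: "Kn N > 0" unfolding Kn_def by simp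

lemma pN_ge: "s \<le> T \<Longrightarrow> s \<le> pN T N s"
proof -
  assume "s \<le> T"
  have "s * Kn N \<le> real_of_int \<lceil>s * Kn N\<rceil>" by (rule le_of_int_ceiling)
  hence "s \<le> real_of_int \<lceil>s * Kn N\<rceil> / Kn N" using Kn_pos[of N] by (simp add: le_divide_eq)
  thus ?thesis using \<open>s \<le> T\<close> unfolding pN_def by simp
qed

lemma pN_le: "pN T N s \<le> T" unfolding pN_def by simp

lemma pN_upper: "pN T N s < s + 1 / Kn N"
proof -
  have "real_of_int \<lceil>s * Kn N\<rceil> < s * Kn N + 1" using ceiling_correct[of "s * Kn N"] by linarith
  hence "real_of_int \<lceil>s * Kn N\<rceil> / Kn N < s + 1 / Kn N" using Kn_pos[of N]
    by (simp add: divide_less_eq distrib_right)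
  thus ?thesis unfolding pN_def by linarith
qed

lemma pN_finite: assumes "T \<ge> 0" shows "finite (pN T N ` {0..T})"
proof -
  have "pN T N ` {0..T} \<subseteq> (\<lambda>j. min T (real_of_int j / Kn N)) ` {0..\<lceil>T * Kn N\<rceil>}"
  proof
    fix y assume "y \<in> pN T N ` {0..T}"
    then obtain s where s: "s \<in> {0..T}" "y = pN T N s" by auto
    have "0 \<le> s * Kn N" using s Kn_pos[of N] by simp
    hence "0 \<le> \<lceil>s * Kn N\<rceil>" by linarith
    moreover have "\<lceil>s * Kn N\<rceil> \<le> \<lceil>T * Kn N\<rceil>"
      using s Kn_pos[of N] by (intro ceiling_mono) (simp add: mult_right_mono)
    ultimately show "y \<in> (\<lambda>j. min T (real_of_int j / Kn N)) ` {0..\<lceil>T * Kn N\<rceil>}"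
      using s unfolding pN_def by auto
  qed
  thus ?thesis by (rule finite_subset) simp
qed

lemma pN_meas:
  fixes G :: "real \<Rightarrow> 'b::topological_space"
  shows "(\<lambda>s. G (pN T N s)) \<in> borel_measurable borel"
proof -
  have "(\<lambda>s. (\<lambda>j x. G (min T (real_of_int j / Kn N))) (\<lceil>s * Kn N\<rceil>) s) \<in> borel_measurable borel"
    by (rule measurable_compose_countable) measurable
  thus ?thesis unfolding pN_def by simp
qed

lemma occ_approx:
  fixes f :: "real \<Rightarrow> nat" and V :: "nat \<Rightarrow> real^'d"
  assumes T: "T \<ge> 0" and bnd: "\<And>s. s \<in> {0..T} \<Longrightarrow> norm (V (f s)) \<le> B"
    and rc: "\<And>s. s \<in> {0..T} \<Longrightarrow> \<exists>\<delta>>0. \<forall>u\<in>{s..<s+\<delta>}. f u = f s"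
  shows "(\<lambda>s. V (f s)) integrable_on {0..T}"
    "(\<lambda>N. integral {0..T} (\<lambda>s. V (f (pN T N s)))) \<longlonglongrightarrow> integral {0..T} (\<lambda>s. V (f s))"
proof -
  have pin: "pN T N s \<in> {0..T}" if "s \<in> {0..T}" for s N
    using pN_ge[of s T N] pN_le[of T N s] that by auto
  have int: "(\<lambda>s. V (f (pN T N s))) integrable_on {0..T}" for N
  proof -
    have m: "(\<lambda>s. V (f (pN T N s))) \<in> borel_measurable borel" by (rule pN_meas)
    have "(\<lambda>s. V (f (pN T N s))) \<circ> id \<in> borel_measurable (lebesgue_on {0..T})"
      by (rule measurable_comp[OF id_borel_measurable_lebesgue_on m])
    hence ml: "(\<lambda>s. V (f (pN T N s))) \<in> borel_measurable (lebesgue_on {0..T})" by (simp add: o_def)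
    have bd: "norm (V (f (pN T N x))) \<le> B" if "x \<in> {0..T}" for x
      using bnd[OF pin[OF that]] .
    have "(\<lambda>s. V (f (pN T N s))) absolutely_integrable_on {0..T}"
      by (rule measurable_bounded_by_integrable_imp_absolutely_integrable[where g="\<lambda>_. B", OF ml _ _ bd])
         (auto simp: integrable_const_ivl)
    thus ?thesis using set_lebesgue_integral_eq_integral(1) by blast
  qed
  have conv: "(\<lambda>N. V (f (pN T N s))) \<longlonglongrightarrow> V (f s)" if s: "s \<in> {0..T}" for s
  proof -
    obtain \<delta> where d: "\<delta> > 0" and d2: "\<forall>u\<in>{s..<s+\<delta>}. f u = f s"
      using rc[OF s] by auto
    obtain N0 where N0: "inverse (real (Suc N0)) < \<delta>" using reals_Archimedean[OF d] by blast
    have ev: "V (f (pN T N s)) = V (f s)" if "N \<ge> N0" for N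
    proof -
      have "inverse (real (Suc N)) \<le> inverse (real (Suc N0))"
        using that by (intro le_imp_inverse_le) simp_all
      moreover have "1 / Kn N = inverse (real (Suc N))" by (simp add: Kn_def divide_inverse)
      ultimately have "1 / Kn N < \<delta>" using N0 by linarith
      moreover have "pN T N s < s + 1 / Kn N" by (rule pN_upper)
      moreover have "s \<le> pN T N s" using s by (intro pN_ge) simp
      ultimately have "pN T N s \<in> {s..<s+\<delta>}" by simp
      hence "f (pN T N s) = f s" using d2 by blast
      thus ?thesis by simp
    qed
    show ?thesis
      by (rule tendsto_eventually) (rule eventually_sequentiallyI[of N0], rule ev)
  qed
  show "(\<lambda>s. V (f s)) integrable_on {0..T}"
    "(\<lambda>N. integral {0..T} (\<lambda>s. V (f (pN T N s)))) \<longlonglongrightarrow> integral {0..T} (\<lambda>s. V (f s))"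
    using dominated_convergence[where f="\<lambda>N s. V (f (pN T N s))" and h="\<lambda>_. B" and S="{0..T}",
        OF int _ _ conv] bnd pin by auto
qed



lemma restrict_meas:
  fixes Y :: "real \<Rightarrow> 'a \<Rightarrow> nat" and \<Phi> :: "(real \<Rightarrow> nat) \<Rightarrow> 'b::topological_space"
  assumes "finite P" "\<And>p. p \<in> P \<Longrightarrow> Y p \<in> measurable N (count_space UNIV)"
  shows "(\<lambda>\<omega>. \<Phi> (restrict (\<lambda>p. Y p \<omega>) P)) \<in> borel_measurable N"
  using assms
proof (induction P arbitrary: \<Phi> rule: finite_induct)
  case empty
  then show ?case by simp
next
  case (insert p P)
  have eq: "restrict (\<lambda>q. Y q \<omega>) (insert p P) = (restrict (\<lambda>q. Y q \<omega>) P)(p := Y p \<omega>)" for \<omega>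
    using insert(2) by (auto simp: restrict_def fun_eq_iff)
  have "(\<lambda>\<omega>. (\<lambda>j \<omega>. (\<lambda>y. \<Phi> (y(p := j))) (restrict (\<lambda>q. Y q \<omega>) P)) (Y p \<omega>) \<omega>) \<in> borel_measurable N"
    by (rule measurable_compose_countable) (use insert in auto)
  then show ?case by (simp only: eq)
qed

definition gens :: "'a measure \<Rightarrow> (real \<Rightarrow> 'a \<Rightarrow> nat) \<Rightarrow> real \<Rightarrow> 'a set set" where
  "gens M X T = (\<Union>u\<in>{0..T}. {state_event M X u j | j. True})"

lemma gens_sub: "gens M X T \<subseteq> Pow (space M)"
  unfolding gens_def state_event_def by auto

lemma sets_sig: "sets (sigma (space M) (gens M X T)) = nat_filtration M X T"
  unfolding nat_filtration_def gens_def[symmetric] using gens_sub by (rule sets_measure_of)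

lemma space_sig: "space (sigma (space M) (gens M X T)) = space M"
  using gens_sub by (rule space_measure_of)

lemma X_meas_sig:
  assumes "p \<in> {0..T}"
  shows "X p \<in> measurable (sigma (space M) (gens M X T)) (count_space UNIV)"
  unfolding measurable_count_space_eq2_countable
proof (intro conjI ballI)
  show "X p \<in> space (sigma (space M) (gens M X T)) \<rightarrow> UNIV" by simp
  fix a :: nat
  have "state_event M X p a \<in> gens M X T" unfolding gens_def using assms by blast
  hence "state_event M X p a \<in> sets (sigma (space M) (gens M X T))"
    unfolding sets_sig nat_filtration_def gens_def[symmetric] by (rule sigma_sets.Basic)
  moreover have "X p -` {a} \<inter> space (sigma (space M) (gens M X T)) = state_event M X p a"
    unfolding space_sig state_event_def by auto
  ultimately show "X p -` {a} \<inter> space (sigma (space M) (gens M X T)) \<in> sets (sigma (space M) (gens M X T))"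
    by simp
qed

lemma path_props:
  assumes A1: "regular_jump_markov M n X q" and w: "\<omega> \<in> space M"
  shows "\<And>s. s \<ge> 0 \<Longrightarrow> X s \<omega> \<in> {1..n}"
    "\<And>s. s \<ge> 0 \<Longrightarrow> \<exists>\<delta>>0. \<forall>u\<in>{s..<s+\<delta>}. X u \<omega> = X s \<omega>"
proof -
  have h: "(\<forall>t\<ge>0. \<forall>\<omega>\<in>space M. X t \<omega> \<in> {1..n}) \<and>
     (\<forall>\<omega>\<in>space M. \<forall>t\<ge>0. \<exists>\<delta>>0. \<forall>s\<in>{t..<t+\<delta>}. X s \<omega> = X t \<omega>)"
    using A1[unfolded regular_jump_markov_def] by (elim conjE) (intro conjI; assumption)
  show "\<And>s. s \<ge> 0 \<Longrightarrow> X s \<omega> \<in> {1..n}" using h w by blast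
  show "\<And>s. s \<ge> 0 \<Longrightarrow> \<exists>\<delta>>0. \<forall>u\<in>{s..<s+\<delta>}. X u \<omega> = X s \<omega>" using h w by blast
qed

lemma occ_integrable_and_limit:
  fixes v :: "nat \<Rightarrow> real^'d"
  assumes A1: "regular_jump_markov M n X q" and w: "\<omega> \<in> space M" and T: "T \<ge> 0"
  shows "(\<lambda>s. v (X s \<omega>)) integrable_on {0..T}"
    "(\<lambda>N. integral {0..T} (\<lambda>s. v (X (pN T N s) \<omega>))) \<longlonglongrightarrow> occ v X T \<omega>"
proof -
  define B where "B = Max ((\<lambda>j. norm (v j)) ` {1..n})"
  have bnd: "norm (v (X s \<omega>)) \<le> B" if "s \<in> {0..T}" for s
    unfolding B_def using path_props(1)[OF A1 w, of s] that by (intro Max_ge) auto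
  have rc: "\<exists>\<delta>>0. \<forall>u\<in>{s..<s+\<delta>}. X u \<omega> = X s \<omega>" if "s \<in> {0..T}" for s
    using path_props(2)[OF A1 w, of s] that by auto
  show "(\<lambda>s. v (X s \<omega>)) integrable_on {0..T}"
    "(\<lambda>N. integral {0..T} (\<lambda>s. v (X (pN T N s) \<omega>))) \<longlonglongrightarrow> occ v X T \<omega>"
    using occ_approx[where f="\<lambda>s. X s \<omega>" and V=v, OF T bnd rc] unfolding occ_def by auto
qed

lemma occ_meas:
  fixes v :: "nat \<Rightarrow> real^'d"
  assumes A1: "regular_jump_markov M n X q" and T: "T \<ge> 0"
  shows "occ v X T \<in> borel_measurable (sigma (space M) (gens M X T))"
proof (rule borel_measurable_LIMSEQ_metric)
  fix N
  let ?P = "pN T N ` {0..T}"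
  have pin: "pN T N s \<in> {0..T}" if "s \<in> {0..T}" for s
    using pN_ge[of s T N] pN_le[of T N s] that by auto
  have m: "(\<lambda>\<omega>. (\<lambda>y. integral {0..T} (\<lambda>s. v (y (pN T N s)))) (restrict (\<lambda>p. X p \<omega>) ?P))
      \<in> borel_measurable (sigma (space M) (gens M X T))"
    by (rule restrict_meas[OF pN_finite[OF T]]) (use X_meas_sig pin in blast)
  have "(\<lambda>y. integral {0..T} (\<lambda>s. v (y (pN T N s)))) (restrict (\<lambda>p. X p \<omega>) ?P)
        = integral {0..T} (\<lambda>s. v (X (pN T N s) \<omega>))" for \<omega>
    by (intro integral_cong) auto
  with m show "(\<lambda>\<omega>. integral {0..T} (\<lambda>s. v (X (pN T N s) \<omega>)))
      \<in> borel_measurable (sigma (space M) (gens M X T))" by simp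
next
  fix \<omega> assume "\<omega> \<in> space (sigma (space M) (gens M X T))"
  hence "\<omega> \<in> space M" by (simp add: space_sig)
  thus "(\<lambda>N. integral {0..T} (\<lambda>s. v (X (pN T N s) \<omega>))) \<longlonglongrightarrow> occ v X T \<omega>"
    by (rule occ_integrable_and_limit(2)[OF A1 _ T])
qed

lemma filt_sub_sets:
  assumes A1: "regular_jump_markov M n X q"
  shows "nat_filtration M X T \<subseteq> sets M"
  unfolding nat_filtration_def
proof (rule sigma_algebra.sigma_sets_subset)
  show "sigma_algebra (space M) (sets M)" by (rule sets.sigma_algebra_axioms)
  show "(\<Union>u\<in>{0..T}. {state_event M X u j |j. True}) \<subseteq> sets M"
  proof clarify
    fix u j assume u: "u \<in> {0..T}"
    have "\<forall>t\<ge>0. X t \<in> measurable M (count_space UNIV)"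
      using A1[unfolded regular_jump_markov_def] by (elim conjE) assumption
    hence "X u \<in> measurable M (count_space UNIV)" using u by simp
    hence "X u -` {j} \<inter> space M \<in> sets M" by (rule measurable_sets) simp
    moreover have "X u -` {j} \<inter> space M = state_event M X u j" unfolding state_event_def by auto
    ultimately show "state_event M X u j \<in> sets M" by simp
  qed
qed

lemma occ_le_filt:
  fixes v :: "nat \<Rightarrow> real^'d"
  assumes A1: "regular_jump_markov M n X q" and T: "T \<ge> 0"
  shows "{\<omega> \<in> space M. occ v X T \<omega> \<le> y} \<in> nat_filtration M X T"
proof -
  have "occ v X T -` {..y} \<inter> space (sigma (space M) (gens M X T)) \<in> sets (sigma (space M) (gens M X T))"
    by (rule measurable_sets[OF occ_meas[OF A1 T]]) (simp add: borel_closed)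
  moreover have "occ v X T -` {..y} \<inter> space (sigma (space M) (gens M X T)) = {\<omega> \<in> space M. occ v X T \<omega> \<le> y}"
    by (auto simp: space_sig)
  ultimately show ?thesis by (simp add: sets_sig)
qed



lemma occ_split:
  fixes v :: "nat \<Rightarrow> real^'d"
  assumes A1: "regular_jump_markov M n X q" and w: "\<omega> \<in> space M" and t: "t \<ge> 0" and eps: "\<epsilon> > 0"
  shows "occ v X t \<omega> + \<epsilon> *\<^sub>R vmin n v \<le> occ v X (t+\<epsilon>) \<omega>"
    "occ v X (t+\<epsilon>) \<omega> \<le> occ v X t \<omega> + \<epsilon> *\<^sub>R vmax n v"
proof -
  define f where "f = (\<lambda>s. v (X s \<omega>))"
  have fi: "f integrable_on {0..t+\<epsilon>}" unfolding f_def
    using occ_integrable_and_limit(1)[OF A1 w, of "t+\<epsilon>"] t eps by simp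
  define I where "I = integral {t..t+\<epsilon>} f"
  have split: "occ v X (t+\<epsilon>) \<omega> = occ v X t \<omega> + I"
    unfolding occ_def I_def f_def[symmetric]
    using Henstock_Kurzweil_Integration.integral_combine[where a=0 and c=t and b="t+\<epsilon>" and f=f] fi t eps by simp
  have fi2: "f integrable_on {t..t+\<epsilon>}"
    by (rule integrable_subinterval_real[OF fi]) (use t in auto)
  have comp: "I $ c = integral {t..t+\<epsilon>} (\<lambda>s. f s $ c)" for c
    unfolding I_def using integral_component_eq_cart[OF fi2] by simp
  have fci: "(\<lambda>s. f s $ c) integrable_on {t..t+\<epsilon>}" for c
    using integrable_linear[OF fi2 bounded_linear_vec_nth] by (simp add: o_def)
  have inr: "X s \<omega> \<in> {1..n}" if "s \<in> {t..t+\<epsilon>}" for s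
    using path_props(1)[OF A1 w, of s] that t by auto
  have lo: "vmin n v $ c \<le> f s $ c" if "s \<in> {t..t+\<epsilon>}" for s c
    unfolding vmin_def f_def using inr[OF that] by (auto intro: Min_le)
  have hi: "f s $ c \<le> vmax n v $ c" if "s \<in> {t..t+\<epsilon>}" for s c
    unfolding vmax_def f_def using inr[OF that] by (auto intro: Max_ge)
  have cont: "integral {t..t+\<epsilon>} (\<lambda>s. a) = \<epsilon> * a" for a :: real using eps by simp
  have Ilo: "\<epsilon> * vmin n v $ c \<le> I $ c" for c
  proof -
    have "integral {t..t+\<epsilon>} (\<lambda>s. vmin n v $ c) \<le> integral {t..t+\<epsilon>} (\<lambda>s. f s $ c)"
      by (rule integral_le[OF _ fci]) (auto intro: lo)
    thus ?thesis using comp eps by simp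
  qed
  have Ihi: "I $ c \<le> \<epsilon> * vmax n v $ c" for c
  proof -
    have "integral {t..t+\<epsilon>} (\<lambda>s. f s $ c) \<le> integral {t..t+\<epsilon>} (\<lambda>s. vmax n v $ c)"
      by (rule integral_le[OF fci]) (auto intro: hi)
    thus ?thesis using comp eps by simp
  qed
  show "occ v X t \<omega> + \<epsilon> *\<^sub>R vmin n v \<le> occ v X (t+\<epsilon>) \<omega>"
    unfolding split less_eq_vec_def using Ilo by simp
  show "occ v X (t+\<epsilon>) \<omega> \<le> occ v X t \<omega> + \<epsilon> *\<^sub>R vmax n v"
    unfolding split less_eq_vec_def using Ihi by simp
qed



theorem lemma3:
  fixes M :: "'a measure" and n :: nat and X :: "real \<Rightarrow> 'a \<Rightarrow> nat"
    and q :: "nat \<Rightarrow> nat \<Rightarrow> real \<Rightarrow> real" and v :: "nat \<Rightarrow> real^'d"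
    and i k :: nat and \<epsilon> t :: real and x :: "real^'d"
  assumes A1: "regular_jump_markov M n X q"
    and A2: "rate_assumptions n q"
    and i: "i \<in> {1..n}" and k: "k \<in> {1..n}"
    and eps: "\<epsilon> > 0" and t: "t \<ge> 0"
  shows "measure M {\<omega> \<in> space M. X t \<omega> = i \<and> X (t+\<epsilon>) \<omega> = k} * Fv M v X i t (x - \<epsilon> *\<^sub>R vmax n v)
           \<le> measure M {\<omega> \<in> space M. X t \<omega> = i \<and> X (t+\<epsilon>) \<omega> = k \<and> occ v X (t+\<epsilon>) \<omega> \<le> x}
             * measure M {\<omega> \<in> space M. X t \<omega> = i}
       \<and> measure M {\<omega> \<in> space M. X t \<omega> = i \<and> X (t+\<epsilon>) \<omega> = k \<and> occ v X (t+\<epsilon>) \<omega> \<le> x}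
             * measure M {\<omega> \<in> space M. X t \<omega> = i}
           \<le> measure M {\<omega> \<in> space M. X t \<omega> = i \<and> X (t+\<epsilon>) \<omega> = k} * Fv M v X i t (x - \<epsilon> *\<^sub>R vmin n v)"
proof -
  have P: "prob_space M"
    using A1[unfolded regular_jump_markov_def] by (elim conjE) assumption
  interpret prob_space M by (rule P)
  have markov: "\<forall>s h i j A. 0 \<le> s \<longrightarrow> 0 \<le> h \<longrightarrow> A \<in> nat_filtration M X s \<longrightarrow>
        measure M (A \<inter> state_event M X s i \<inter> state_event M X (s+h) j) * measure M (state_event M X s i)
        = measure M (A \<inter> state_event M X s i) * measure M (state_event M X s i \<inter> state_event M X (s+h) j)"
    using A1[unfolded regular_jump_markov_def] by (elim conjE) assumption
  define A where "A = state_event M X t i"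
  define B where "B = state_event M X (t+\<epsilon>) k"
  define C where "C = {\<omega> \<in> space M. X t \<omega> = i \<and> X (t+\<epsilon>) \<omega> = k \<and> occ v X (t+\<epsilon>) \<omega> \<le> x}"
  define S1 where "S1 = {\<omega> \<in> space M. occ v X t \<omega> \<le> x - \<epsilon> *\<^sub>R vmax n v}"
  define S2 where "S2 = {\<omega> \<in> space M. occ v X t \<omega> \<le> x - \<epsilon> *\<^sub>R vmin n v}"
  have te: "t + \<epsilon> \<ge> 0" using t eps by simp
  have S1f: "S1 \<in> nat_filtration M X t" unfolding S1_def by (rule occ_le_filt[OF A1 t])
  have S2f: "S2 \<in> nat_filtration M X t" unfolding S2_def by (rule occ_le_filt[OF A1 t])
  have S2m: "S2 \<in> sets M" using S2f filt_sub_sets[OF A1] by blast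
  have se: "state_event M X u j \<in> sets M" if u0: "u \<ge> 0" for u j
  proof -
    have "state_event M X u j \<in> gens M X u" unfolding gens_def
      by (rule UN_I[of u]) (use u0 in auto)
    hence "state_event M X u j \<in> nat_filtration M X u"
      unfolding nat_filtration_def gens_def[symmetric] by (rule sigma_sets.Basic)
    thus ?thesis by (rule subsetD[OF filt_sub_sets[OF A1]])
  qed
  have Am: "A \<in> sets M" unfolding A_def by (rule se[OF t])
  have Bm: "B \<in> sets M" unfolding B_def by (rule se[OF te])
  have Lm: "{\<omega> \<in> space M. occ v X (t+\<epsilon>) \<omega> \<le> x} \<in> sets M"
    using occ_le_filt[OF A1 te] filt_sub_sets[OF A1] by blast
  have CE: "C = A \<inter> B \<inter> {\<omega> \<in> space M. occ v X (t+\<epsilon>) \<omega> \<le> x}"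
    unfolding C_def A_def B_def state_event_def by auto
  have Cm: "C \<in> sets M" unfolding CE using Am Bm Lm by auto
  have sub1: "S1 \<inter> A \<inter> B \<subseteq> C"
  proof
    fix \<omega> assume "\<omega> \<in> S1 \<inter> A \<inter> B"
    hence w: "\<omega> \<in> space M" and o1: "occ v X t \<omega> \<le> x - \<epsilon> *\<^sub>R vmax n v"
      and "X t \<omega> = i" "X (t+\<epsilon>) \<omega> = k"
      unfolding S1_def A_def B_def state_event_def by auto
    have "occ v X (t+\<epsilon>) \<omega> \<le> occ v X t \<omega> + \<epsilon> *\<^sub>R vmax n v" by (rule occ_split(2)[OF A1 w t eps])
    also have "\<dots> \<le> x" using o1 unfolding less_eq_vec_def
      by (simp add: algebra_simps)
    finally show "\<omega> \<in> C" unfolding C_def using w \<open>X t \<omega> = i\<close> \<open>X (t+\<epsilon>) \<omega> = k\<close> by simp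
  qed
  have sub2: "C \<subseteq> S2 \<inter> A \<inter> B"
  proof
    fix \<omega> assume "\<omega> \<in> C"
    hence w: "\<omega> \<in> space M" and o1: "occ v X (t+\<epsilon>) \<omega> \<le> x"
      and "X t \<omega> = i" "X (t+\<epsilon>) \<omega> = k"
      unfolding C_def by auto
    have "occ v X t \<omega> + \<epsilon> *\<^sub>R vmin n v \<le> occ v X (t+\<epsilon>) \<omega>" by (rule occ_split(1)[OF A1 w t eps])
    hence "occ v X t \<omega> + \<epsilon> *\<^sub>R vmin n v \<le> x" using o1 by (rule order_trans)
    hence "occ v X t \<omega> \<le> x - \<epsilon> *\<^sub>R vmin n v" unfolding less_eq_vec_def by (simp add: algebra_simps)
    thus "\<omega> \<in> S2 \<inter> A \<inter> B" unfolding S2_def A_def B_def state_event_def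
      using w \<open>X t \<omega> = i\<close> \<open>X (t+\<epsilon>) \<omega> = k\<close> by simp
  qed
  have m1: "measure M (S1 \<inter> A \<inter> B) * measure M A = measure M (S1 \<inter> A) * measure M (A \<inter> B)"
    unfolding A_def B_def using eps by (intro markov[rule_format, OF t _ S1f]) simp
  have m2: "measure M (S2 \<inter> A \<inter> B) * measure M A = measure M (S2 \<inter> A) * measure M (A \<inter> B)"
    unfolding A_def B_def using eps by (intro markov[rule_format, OF t _ S2f]) simp
  have e1: "S1 \<inter> A = {\<omega> \<in> space M. X t \<omega> = i \<and> occ v X t \<omega> \<le> x - \<epsilon> *\<^sub>R vmax n v}"
    unfolding S1_def A_def state_event_def by auto
  have e2: "S2 \<inter> A = {\<omega> \<in> space M. X t \<omega> = i \<and> occ v X t \<omega> \<le> x - \<epsilon> *\<^sub>R vmin n v}"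
    unfolding S2_def A_def state_event_def by auto
  have eAB: "A \<inter> B = {\<omega> \<in> space M. X t \<omega> = i \<and> X (t+\<epsilon>) \<omega> = k}"
    unfolding A_def B_def state_event_def by auto
  have eA: "A = {\<omega> \<in> space M. X t \<omega> = i}" unfolding A_def state_event_def by auto
  have mono1: "measure M (S1 \<inter> A \<inter> B) \<le> measure M C"
    by (rule finite_measure_mono[OF sub1 Cm])
  have mono2: "measure M C \<le> measure M (S2 \<inter> A \<inter> B)"
    by (rule finite_measure_mono[OF sub2]) (use S2m Am Bm in auto)
  have A0: "measure M A \<ge> 0" by simp
  have "measure M (A \<inter> B) * Fv M v X i t (x - \<epsilon> *\<^sub>R vmax n v) = measure M (S1 \<inter> A \<inter> B) * measure M A"
    unfolding Fv_def using m1 e1 by simp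
  also have "\<dots> \<le> measure M C * measure M A" by (rule mult_right_mono[OF mono1 A0])
  finally have r1: "measure M (A \<inter> B) * Fv M v X i t (x - \<epsilon> *\<^sub>R vmax n v) \<le> measure M C * measure M A" .
  have "measure M C * measure M A \<le> measure M (S2 \<inter> A \<inter> B) * measure M A"
    by (rule mult_right_mono[OF mono2 A0])
  also have "\<dots> = measure M (A \<inter> B) * Fv M v X i t (x - \<epsilon> *\<^sub>R vmin n v)"
    unfolding Fv_def using m2 e2 by simp
  finally have r2: "measure M C * measure M A \<le> measure M (A \<inter> B) * Fv M v X i t (x - \<epsilon> *\<^sub>R vmin n v)" .
  show ?thesis using r1 r2 unfolding eAB unfolding eA C_def by (rule conjI)
qed


end
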